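(* Let $A\ge2$, $H\ge5$ and $S\ge A^{(1-1/e)H}$. Then there exists an episodic tabular MDP with $S$ states, $A$ actions, horizon $H$ and deterministic rewards in $\{0,1\}$ such that $$\frac{V^{0,*}}{V^{T,*}}\le\frac{2}{(A-1)^{(1-1/e)H-3}}.$$ Here $V^{0,*}$ is the optimal value of Markovian (no-lookahead) policies and $V^{T,*}$ is the optimal value of one-step transition-lookahead policies.
   Context: Episodic tabular MDP: finite state space of size $S$, finite action space of size $A$, horizon $H$, initial state distribution, transition kernels $P_h(\cdot\mid s,a)$, and non-negative rewards. The value of a policy is the expected sum of rewards over steps $1,\dots,H$. A no-lookahead (Markovian) policy chooses $a_h$ based only on $h$ and $s_h$. For each $(h,s,a)$, the next state $s'_{h}(s,a)\sim P_h(\cdot\mid s,a)$ is drawn independently across $h$, and transitions are independent of rewards. If the agent is at $s_h$ and plays $a_h$, then $s_{h+1}=s'_h(s_h,a_h)$. A one-step transition-lookahead policy, at step $h$ in state $s_h$, observes the realized next states $\{s'_h(s_h,a)\}_{a\in\mathcal A}$ for all actions before choosing $a_h$. It has no reward lookahead. *)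

theory Defs
  imports Complex_Main "HOL-Library.FuncSet"
begin

text \<open>Episodic tabular MDP with states {0..<S}, actions {0..<A}, steps 0..H-1
  (0-indexed version of steps 1..H).  mu s = initial probability of state s,
  P h s a s' = P_h(s' | s, a), r h s a = (deterministic) reward.\<close>

definition is_mdp ::
  "nat \<Rightarrow> nat \<Rightarrow> nat \<Rightarrow> (nat \<Rightarrow> real) \<Rightarrow> (nat \<Rightarrow> nat \<Rightarrow> nat \<Rightarrow> nat \<Rightarrow> real)
   \<Rightarrow> (nat \<Rightarrow> nat \<Rightarrow> nat \<Rightarrow> real) \<Rightarrow> bool" where
  "is_mdp S A H mu P r \<longleftrightarrow>
     (\<forall>s<S. 0 \<le> mu s) \<and> (\<Sum>s<S. mu s) = 1 \<and>
     (\<forall>h<H. \<forall>s<S. \<forall>a<A. (\<forall>s'<S. 0 \<le> P h s a s') \<and> (\<Sum>s'<S. P h s a s') = 1) \<and>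
     (\<forall>h<H. \<forall>s<S. \<forall>a<A. 0 \<le> r h s a)"

definition markov_policy :: "nat \<Rightarrow> (nat \<Rightarrow> nat \<Rightarrow> nat \<Rightarrow> real) \<Rightarrow> bool" where
  "markov_policy A pol \<longleftrightarrow> (\<forall>h s. (\<forall>a. 0 \<le> pol h s a) \<and> (\<Sum>a<A. pol h s a) = 1)"

text \<open>Expected reward-to-go of a Markov policy with n steps remaining
  (current step index H - n) from state s.\<close>

primrec nl_value ::
  "nat \<Rightarrow> nat \<Rightarrow> nat \<Rightarrow> (nat \<Rightarrow> nat \<Rightarrow> nat \<Rightarrow> nat \<Rightarrow> real) \<Rightarrow> (nat \<Rightarrow> nat \<Rightarrow> nat \<Rightarrow> real)
   \<Rightarrow> (nat \<Rightarrow> nat \<Rightarrow> nat \<Rightarrow> real) \<Rightarrow> nat \<Rightarrow> nat \<Rightarrow> real" where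
  "nl_value S A H P r pol 0 s = 0"
| "nl_value S A H P r pol (Suc n) s =
     (let h = H - Suc n in
      (\<Sum>a<A. pol h s a * (r h s a + (\<Sum>s'<S. P h s a s' * nl_value S A H P r pol n s'))))"

definition V0star ::
  "nat \<Rightarrow> nat \<Rightarrow> nat \<Rightarrow> (nat \<Rightarrow> real) \<Rightarrow> (nat \<Rightarrow> nat \<Rightarrow> nat \<Rightarrow> nat \<Rightarrow> real)
   \<Rightarrow> (nat \<Rightarrow> nat \<Rightarrow> nat \<Rightarrow> real) \<Rightarrow> real" where
  "V0star S A H mu P r =
     (SUP pol \<in> {pol. markov_policy A pol}. (\<Sum>s<S. mu s * nl_value S A H P r pol H s))"

text \<open>One-step transition-lookahead policies: pol h s v is the action chosen at step h in
  state s after observing the realized next states v a = s'_h(s,a) for all actions a.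
  The next states of different actions are drawn independently, so the observed vector v
  (an element of PiE {..<A} (\<lambda>_. {..<S})) has probability \<Prod>a<A. P h s a (v a).\<close>

definition lookahead_policy :: "nat \<Rightarrow> (nat \<Rightarrow> nat \<Rightarrow> (nat \<Rightarrow> nat) \<Rightarrow> nat) \<Rightarrow> bool" where
  "lookahead_policy A pol \<longleftrightarrow> (\<forall>h s v. pol h s v < A)"

primrec la_value ::
  "nat \<Rightarrow> nat \<Rightarrow> nat \<Rightarrow> (nat \<Rightarrow> nat \<Rightarrow> nat \<Rightarrow> nat \<Rightarrow> real) \<Rightarrow> (nat \<Rightarrow> nat \<Rightarrow> nat \<Rightarrow> real)
   \<Rightarrow> (nat \<Rightarrow> nat \<Rightarrow> (nat \<Rightarrow> nat) \<Rightarrow> nat) \<Rightarrow> nat \<Rightarrow> nat \<Rightarrow> real" where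
  "la_value S A H P r pol 0 s = 0"
| "la_value S A H P r pol (Suc n) s =
     (let h = H - Suc n in
      (\<Sum>v\<in>PiE {..<A} (\<lambda>_. {..<S}).
          (\<Prod>a<A. P h s a (v a)) *
          (r h s (pol h s v) + la_value S A H P r pol n (v (pol h s v)))))"

definition VTstar ::
  "nat \<Rightarrow> nat \<Rightarrow> nat \<Rightarrow> (nat \<Rightarrow> real) \<Rightarrow> (nat \<Rightarrow> nat \<Rightarrow> nat \<Rightarrow> nat \<Rightarrow> real)
   \<Rightarrow> (nat \<Rightarrow> nat \<Rightarrow> nat \<Rightarrow> real) \<Rightarrow> real" where
  "VTstar S A H mu P r =
     (SUP pol \<in> {pol. lookahead_policy A pol}. (\<Sum>s<S. mu s * la_value S A H P r pol H s))"

end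

theory Submission
  imports Defs "HOL-Analysis.Convex"
begin


definition PP :: "real \<Rightarrow> nat \<Rightarrow> nat \<Rightarrow> nat \<Rightarrow> nat \<Rightarrow> real" where
 "PP p h s a s' = (if s'=0 then (if s=0 then p else 0) else if s'=1 then (if s=0 then 1-p else 1) else 0)"
definition RR :: "nat \<Rightarrow> nat \<Rightarrow> nat \<Rightarrow> nat \<Rightarrow> real" where
 "RR H h s a = (if s=0 \<and> h = H-1 then 1 else 0)"
definition MU :: "nat \<Rightarrow> real" where "MU s = (if s=0 then 1 else 0)"
definition PT :: "nat \<Rightarrow> nat \<Rightarrow> nat \<Rightarrow> (nat \<Rightarrow> nat) \<Rightarrow> nat" where
 "PT A h s v = (if \<exists>a<A. v a = 0 then (LEAST a. v a = 0) else 0)"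

lemma sum2:
  fixes f g :: "nat \<Rightarrow> real"
  assumes "2 \<le> S" "\<forall>s\<ge>2. f s = 0"
  shows "(\<Sum>s<S. f s * g s) = f 0 * g 0 + f 1 * g 1"
proof -
  have e: "{..<S} = {0,1} \<union> {2..<S}" using assms(1) by auto
  have "(\<Sum>s<S. f s * g s) = (\<Sum>s\<in>{0,1}. f s * g s) + (\<Sum>s\<in>{2..<S}. f s * g s)"
    unfolding e by (rule sum.union_disjoint) auto
  also have "(\<Sum>s\<in>{2..<S}. f s * g s) = 0" using assms(2) by auto
  finally show ?thesis by simp
qed

lemma PP_nonneg: "0 \<le> p \<Longrightarrow> p \<le> 1 \<Longrightarrow> 0 \<le> PP p h s a s'"
  by (auto simp: PP_def)

lemma PP_sum: "2 \<le> S \<Longrightarrow> (\<Sum>s'<S. PP p h s a s') = 1"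
  using sum2[of S "PP p h s a" "\<lambda>_. 1"] by (auto simp: PP_def)

lemma PP_sum1: assumes "2 \<le> S" shows "(\<Sum>s'\<in>{1..<S}. PP p h 0 a s') = 1 - p"
proof -
  have e: "{1..<S} = {1} \<union> {2..<S}" using assms by auto
  have "(\<Sum>s'\<in>{1..<S}. PP p h 0 a s') = (\<Sum>s'\<in>{1}. PP p h 0 a s') + (\<Sum>s'\<in>{2..<S}. PP p h 0 a s')"
    unfolding e by (rule sum.union_disjoint) auto
  also have "(\<Sum>s'\<in>{2..<S}. PP p h 0 a s') = 0" by (auto simp: PP_def)
  finally show ?thesis by (simp add: PP_def)
qed

lemma sum_prod_W:
  fixes f :: "nat \<Rightarrow> real"
  assumes "finite B"
  shows "(\<Sum>v\<in>PiE {..<A} (\<lambda>_. B). \<Prod>a<A. f (v a)) = (\<Sum>s\<in>B. f s) ^ A"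
  using prod_sum_PiE[of "{..<A}" "\<lambda>_. B" "\<lambda>_ y. f y"] assms by simp

lemma nl_bound:
  assumes "markov_policy A pol" "2 \<le> S" "0 \<le> p" "p \<le> 1"
  shows "n \<le> H \<Longrightarrow> nl_value S A H (PP p) (RR H) pol n s \<le> (if s=0 \<and> n\<ge>1 then p^(n-1) else 0)"
proof (induction n arbitrary: s)
  case 0 then show ?case by simp
next
  case (Suc n)
  define h where "h = H - Suc n"
  let ?B = "(if s = 0 then p^n else 0) :: real"
  have pol: "\<And>a. 0 \<le> pol h s a" "(\<Sum>a<A. pol h s a) = 1" using assms(1) by (auto simp: markov_policy_def)
  have inner: "(\<Sum>s'<S. PP p h s a s' * nl_value S A H (PP p) (RR H) pol n s') =
     PP p h s a 0 * nl_value S A H (PP p) (RR H) pol n 0 + PP p h s a 1 * nl_value S A H (PP p) (RR H) pol n 1" for a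
    by (rule sum2) (use assms in \<open>auto simp: PP_def\<close>)
  have IH0: "nl_value S A H (PP p) (RR H) pol n 0 \<le> (if n\<ge>1 then p^(n-1) else 0)"
    and IH1: "nl_value S A H (PP p) (RR H) pol n 1 \<le> 0" using Suc.IH[of 0] Suc.IH[of 1] Suc.prems by auto
  have hH: "h = H - 1 \<longleftrightarrow> n = 0" using Suc.prems h_def by auto
  have trm: "RR H h s a + (\<Sum>s'<S. PP p h s a s' * nl_value S A H (PP p) (RR H) pol n s') \<le> ?B" for a
  proof (cases "s = 0")
    case True
    have "p * nl_value S A H (PP p) (RR H) pol n 0 \<le> p * (if n\<ge>1 then p^(n-1) else 0)"
      using IH0 assms by (intro mult_left_mono) auto
    moreover have "(1-p) * nl_value S A H (PP p) (RR H) pol n 1 \<le> 0"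
      using IH1 assms by (simp add: mult_nonneg_nonpos)
    ultimately show ?thesis using True hH
      unfolding inner
      by (cases n) (auto simp: PP_def RR_def simp del: nl_value.simps)
  next
    case False
    then show ?thesis using IH1 unfolding inner by (simp add: PP_def RR_def del: nl_value.simps)
  qed
  have "nl_value S A H (PP p) (RR H) pol (Suc n) s =
     (\<Sum>a<A. pol h s a * (RR H h s a + (\<Sum>s'<S. PP p h s a s' * nl_value S A H (PP p) (RR H) pol n s')))"
    by (simp add: h_def Let_def)
  also have "\<dots> \<le> (\<Sum>a<A. pol h s a * ?B)"
    by (intro sum_mono mult_left_mono trm pol)
  also have "\<dots> = ?B" using pol by (simp flip: sum_distrib_right)
  finally show ?case by (cases "s=0") (simp_all del: nl_value.simps)
qed

lemma la_nonneg:
  assumes "0 \<le> p" "p \<le> 1"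
  shows "0 \<le> la_value S A H (PP p) (RR H) pol n s"
proof (induction n arbitrary: s)
  case 0 then show ?case by simp
next
  case (Suc n)
  show ?case
    by (simp add: Let_def, intro sum_nonneg mult_nonneg_nonneg prod_nonneg add_nonneg_nonneg PP_nonneg assms Suc)
       (auto simp: RR_def)
qed

lemma W_sum: assumes "2 \<le> S" shows "(\<Sum>v\<in>PiE {..<A} (\<lambda>_. {..<S}). \<Prod>a<A. PP p h s a (v a)) = 1"
  using sum_prod_W[of "{..<S}" "\<lambda>s'. PP p h s 0 s'" A] PP_sum[OF assms]
  by (simp add: PP_def)

lemma la_upper:
  assumes "0 \<le> p" "p \<le> 1" "2 \<le> S"
  shows "la_value S A H (PP p) (RR H) pol n s \<le> real n"
proof (induction n arbitrary: s)
  case 0 then show ?case by simp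
next
  case (Suc n)
  define h where "h = H - Suc n"
  let ?W = "PiE {..<A} (\<lambda>_. {..<S})"
  have "la_value S A H (PP p) (RR H) pol (Suc n) s =
     (\<Sum>v\<in>?W. (\<Prod>a<A. PP p h s a (v a)) *
          (RR H h s (pol h s v) + la_value S A H (PP p) (RR H) pol n (v (pol h s v))))"
    by (simp add: h_def Let_def)
  also have "\<dots> \<le> (\<Sum>v\<in>?W. (\<Prod>a<A. PP p h s a (v a)) * (1 + real n))"
    by (intro sum_mono mult_left_mono add_mono prod_nonneg PP_nonneg assms Suc.IH) (auto simp: RR_def)
  also have "\<dots> = 1 + real n" using W_sum[OF assms(3)] by (simp flip: sum_distrib_right)
  finally show ?case by simp
qed

lemma PT_lt: "0 < A \<Longrightarrow> PT A h s v < A"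
  unfolding PT_def by (auto intro: Least_le le_less_trans)

lemma PT_zero: "\<exists>a<A. v a = 0 \<Longrightarrow> v (PT A h s v) = 0"
  unfolding PT_def by (auto intro: LeastI)



lemma la_lower:
  assumes "0 \<le> p" "p \<le> 1" "2 \<le> S"
  shows "1 \<le> n \<Longrightarrow> n \<le> H \<Longrightarrow> la_value S A H (PP p) (RR H) (PT A) n 0 \<ge> (1 - (1-p)^A)^(n-1)"
proof (induction n)
  case 0 then show ?case by simp
next
  case (Suc n)
  define h where "h = H - Suc n"
  let ?W = "PiE {..<A} (\<lambda>_. {..<S})"
  let ?G = "{v\<in>?W. \<exists>a<A. v a = 0}"
  let ?q = "1 - (1-p)^A"
  let ?pr = "\<lambda>v. (\<Prod>a<A. PP p h 0 a (v a))"
  have hH: "h = H - 1 \<longleftrightarrow> n = 0" using Suc.prems h_def by auto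
  have eq: "la_value S A H (PP p) (RR H) (PT A) (Suc n) 0 =
     (\<Sum>v\<in>?W. ?pr v *
          (RR H h 0 (PT A h 0 v) + la_value S A H (PP p) (RR H) (PT A) n (v (PT A h 0 v))))"
    by (simp add: h_def Let_def)
  show ?case
  proof (cases "n = 0")
    case True
    then show ?thesis unfolding eq using hH W_sum[OF assms(3)] by (simp add: RR_def)
  next
    case False
    have IH: "la_value S A H (PP p) (RR H) (PT A) n 0 \<ge> ?q^(n-1)"
      using Suc False by auto
    have fin: "finite ?W" by (simp add: finite_PiE)
    have diff: "?W - ?G = PiE {..<A} (\<lambda>_. {1..<S})"
      apply (rule set_eqI)
      apply (simp add: PiE_iff)
      by (auto simp: Suc_le_eq)
    have "(\<Sum>v\<in>?W. ?pr v) = (\<Sum>v\<in>?W - ?G. ?pr v) + (\<Sum>v\<in>?G. ?pr v)"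
      by (rule sum.subset_diff) (auto simp: fin)
    also have "(\<Sum>v\<in>?W - ?G. ?pr v) = (1-p)^A"
    proof -
      have a0: "\<And>v. (\<Prod>a<A. PP p h 0 a (v a)) = (\<Prod>a<A. PP p h 0 0 (v a))" by (simp add: PP_def)
      show ?thesis unfolding diff a0 sum_prod_W[of "{1..<S}" "\<lambda>s'. PP p h 0 0 s'" A, OF finite_atLeastLessThan]
        using PP_sum1[OF assms(3)] by simp
    qed
    finally have sG: "(\<Sum>v\<in>?G. ?pr v) = ?q" using W_sum[OF assms(3)] by simp
    have nn: "0 \<le> ?pr v * (RR H h 0 (PT A h 0 v) + la_value S A H (PP p) (RR H) (PT A) n (v (PT A h 0 v)))" for v
      by (intro mult_nonneg_nonneg prod_nonneg PP_nonneg assms add_nonneg_nonneg la_nonneg) (auto simp: RR_def)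
    have "?q^(Suc n - 1) = (\<Sum>v\<in>?G. ?pr v) * ?q^(n-1)"
      using False sG by (cases n) auto
    also have "\<dots> = (\<Sum>v\<in>?G. ?pr v * ?q^(n-1))" by (simp add: sum_distrib_right)
    also have "\<dots> \<le> (\<Sum>v\<in>?G. ?pr v * (RR H h 0 (PT A h 0 v) + la_value S A H (PP p) (RR H) (PT A) n (v (PT A h 0 v))))"
    proof (rule sum_mono)
      fix v assume v: "v \<in> ?G"
      then have "v (PT A h 0 v) = 0" by (intro PT_zero) auto
      then show "?pr v * ?q^(n-1) \<le> ?pr v * (RR H h 0 (PT A h 0 v) + la_value S A H (PP p) (RR H) (PT A) n (v (PT A h 0 v)))"
        using IH False hH by (intro mult_left_mono prod_nonneg PP_nonneg assms) (auto simp: RR_def simp del: la_value.simps)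
    qed
    also have "\<dots> \<le> (\<Sum>v\<in>?W. ?pr v * (RR H h 0 (PT A h 0 v) + la_value S A H (PP p) (RR H) (PT A) n (v (PT A h 0 v))))"
      by (rule sum_mono2) (use fin nn in auto)
    finally show ?thesis unfolding eq .
  qed
qed



lemma key_ineq:
  fixes A H :: nat and q c :: real
  assumes A: "A \<ge> 2" and H: "H \<ge> 5" and c: "c = 1 - 1 / exp 1" and q: "q \<ge> c"
  shows "(1 / real A)^(H-1) / q^(H-1) \<le> 2 / (real A - 1) powr (c * real H - 3)"
proof -
  have e2: "2 \<le> exp (1::real)" using exp_ge_add_one_self[of 1] by simp
  have ie: "1 / exp (1::real) \<le> 1/2" using e2 by (intro divide_left_mono) auto
  have ie2: "0 < 1 / exp (1::real)" by simp
  have c12: "1/2 \<le> c" "c \<le> 1" using ie ie2 c by auto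
  have Ag: "1 \<le> real A - 1" using A by simp
  have cpos: "0 < c" using c12 by simp
  have qpos: "0 < q" using q cpos by simp
  have young: "(real A - 1) powr c * 1 powr (1-c) \<le> c * (real A - 1) + (1-c) * 1"
    by (rule Youngs_inequality_0) (use c12 Ag in auto)
  have b1: "(real A - 1) powr c \<le> real A * c" using young c12 by (simp add: algebra_simps)
  have b2: "real A * c \<le> real A * q" using q A by simp
  have pos1: "0 < (real A - 1) powr c" using Ag by simp
  have "(real A - 1) powr (c * real H - 3) \<le> (real A - 1) powr (c * real (H - 1))"
    using Ag H c12 by (intro powr_mono) (auto simp: of_nat_diff algebra_simps)
  also have "\<dots> = ((real A - 1) powr c) powr real (H-1)" by (simp add: powr_powr)
  also have "\<dots> = ((real A - 1) powr c) ^ (H-1)" using pos1 by (simp add: powr_realpow)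
  also have "\<dots> \<le> (real A * q) ^ (H-1)" using b1 b2 pos1 by (intro power_mono) auto
  finally have main: "(real A - 1) powr (c * real H - 3) \<le> (real A * q) ^ (H-1)" .
  have pp: "0 < (real A - 1) powr (c * real H - 3)" using Ag by simp
  have Aq: "0 < (real A * q) ^ (H-1)" using qpos A by simp
  have "(1 / real A)^(H-1) / q^(H-1) = 1 / (real A * q) ^ (H-1)"
    by (simp add: power_divide power_mult_distrib field_simps)
  also have "\<dots> \<le> 2 / (real A - 1) powr (c * real H - 3)"
    using main pp Aq by (simp add: field_simps)
  finally show ?thesis .
qed



theorem mainTheorem6:
  fixes S A H :: nat
  assumes "A \<ge> 2" and "H \<ge> 5"
    and "real S \<ge> real A powr ((1 - 1 / exp 1) * real H)"
  shows "\<exists>mu P r. is_mdp S A H mu P r \<and> (\<forall>h s a. r h s a \<in> {0, 1}) \<and>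
           VTstar S A H mu P r > 0 \<and>
           V0star S A H mu P r / VTstar S A H mu P r
             \<le> 2 / (real A - 1) powr ((1 - 1 / exp 1) * real H - 3)"
proof -
  define c :: real where "c = 1 - 1 / exp 1"
  define p :: real where "p = 1 / real A"
  define q :: real where "q = 1 - (1 - p)^A"
  have A0: "0 < A" using assms by simp
  have p01: "0 \<le> p" "p \<le> 1" using assms by (auto simp: p_def)
  have e2: "2 \<le> exp (1::real)" using exp_ge_add_one_self[of 1] by simp
  have ie: "1 / exp (1::real) \<le> 1/2" using e2 by (intro divide_left_mono) auto
  have c12: "1/2 \<le> c" using ie c_def by auto
  have S2: "2 \<le> S"
  proof -
    have H5: "(5::real) \<le> real H" using assms(2) by simp
    have "1/2 * 5 \<le> c * real H" by (rule mult_mono) (use c12 H5 in auto)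
    then have "1 \<le> c * real H" by simp
    then have "real A powr 1 \<le> real A powr (c * real H)" using assms(1) by (intro powr_mono) auto
    then have "real A \<le> real S" using assms(3) A0 c_def by simp
    then show ?thesis using assms(1) by linarith
  qed
  have qc: "q \<ge> c"
  proof -
    have "(1 - p)^A \<le> exp (- p) ^ A"
      using exp_ge_add_one_self[of "-p"] p01 by (intro power_mono) auto
    also have "\<dots> = exp (- (real A * p))" by (simp add: exp_of_nat_mult[symmetric])
    also have "\<dots> = 1 / exp 1" using A0 by (simp add: p_def exp_minus field_simps)
    finally show ?thesis by (simp add: q_def c_def)
  qed
  have qpos: "0 < q" using qc c12 by simp
  have mdp: "is_mdp S A H MU (PP p) (RR H)"
  proof -
    have m1: "(\<Sum>s<S. MU s) = 1" using sum2[OF S2, of MU "\<lambda>_. 1"] by (simp add: MU_def)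
    have m2: "\<forall>s<S. 0 \<le> MU s" by (simp add: MU_def)
    have m3: "\<forall>h<H. \<forall>s<S. \<forall>a<A. (\<forall>s'<S. 0 \<le> PP p h s a s') \<and> (\<Sum>s'<S. PP p h s a s') = 1"
      using PP_sum[OF S2] PP_nonneg[OF p01] by blast
    have m4: "\<forall>h<H. \<forall>s<S. \<forall>a<A. 0 \<le> RR H h s a" by (simp add: RR_def)
    show ?thesis unfolding is_mdp_def using m1 m2 m3 m4 by blast
  qed
  have rew: "\<forall>h s a. RR H h s a \<in> {0, 1}" by (simp add: RR_def)
  have muX: "(\<Sum>s<S. MU s * X s) = X 0" for X :: "nat \<Rightarrow> real"
    using sum2[OF S2, of MU X] by (simp add: MU_def)
  have V0: "V0star S A H MU (PP p) (RR H) \<le> p^(H-1)"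
    unfolding V0star_def
  proof (rule cSUP_least)
    have "markov_policy A (\<lambda>h s a. if a = 0 then 1 else 0)"
      using A0 by (simp add: markov_policy_def)
    then show "{pol. markov_policy A pol} \<noteq> {}" by blast
  next
    fix pol assume "pol \<in> {pol. markov_policy A pol}"
    then have "nl_value S A H (PP p) (RR H) pol H 0 \<le> p^(H-1)"
      using nl_bound[of A pol S p H H 0] S2 p01 assms(2) by auto
    then show "(\<Sum>s<S. MU s * nl_value S A H (PP p) (RR H) pol H s) \<le> p^(H-1)"
      by (simp only: muX)
  qed
  have VT: "VTstar S A H MU (PP p) (RR H) \<ge> q^(H-1)"
  proof -
    have "q^(H-1) \<le> la_value S A H (PP p) (RR H) (PT A) H 0"
      using la_lower[OF p01 S2, where n=H and H=H and A=A] assms(2) by (simp add: q_def)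
    also have "\<dots> = (\<Sum>s<S. MU s * la_value S A H (PP p) (RR H) (PT A) H s)"
      by (simp only: muX)
    also have "\<dots> \<le> VTstar S A H MU (PP p) (RR H)"
      unfolding VTstar_def
    proof (rule cSUP_upper)
      show "PT A \<in> {pol. lookahead_policy A pol}" using PT_lt[OF A0] by (simp add: lookahead_policy_def)
      show "bdd_above ((\<lambda>pol. \<Sum>s<S. MU s * la_value S A H (PP p) (RR H) pol H s) ` {pol. lookahead_policy A pol})"
        by (rule bdd_aboveI[where M = "real H"]) (auto simp: muX intro: la_upper[OF p01 S2])
    qed
    finally show ?thesis .
  qed
  have VTpos: "0 < VTstar S A H MU (PP p) (RR H)" using VT qpos
    by (meson less_le_trans zero_less_power)
  have "V0star S A H MU (PP p) (RR H) / VTstar S A H MU (PP p) (RR H) \<le> p^(H-1) / VTstar S A H MU (PP p) (RR H)"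
    using V0 VTpos by (intro divide_right_mono) auto
  also have "\<dots> \<le> p^(H-1) / q^(H-1)"
    using VT qpos p01 VTpos by (intro divide_left_mono) (auto intro: mult_pos_pos)
  also have "\<dots> \<le> 2 / (real A - 1) powr (c * real H - 3)"
    unfolding p_def by (rule key_ineq[OF assms(1,2) c_def qc])
  finally show ?thesis using mdp rew VTpos c_def by blast
qed


end
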